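(* In the noiseless discrete channel setting described in the context, with $(\theta,Y^n,X^n)$ generated by the model and $P_n,Q_n$ as defined there, $$I(\theta;Y^n\mid X^n)=nH(Y)-D(P_n\,\|\,Q_n),$$ and therefore, as $N\to\infty$, $$\left(1-\frac{H(\theta\mid Y^n,X^n)}{H(\theta)}\right)+\frac{D(P_n\,\|\,Q_n)}{H(\theta)}=(1+o(1))\frac{n}{n^*}.$$
   Context: Setting. For each $N\in\mathbb N$: $\Theta=\Theta_N$ is a finite subset of the unit sphere of $\mathbb R^N$ of cardinality $M=M_N$, with $M_N\to\infty$ and $\langle\theta,\theta'\rangle\ge 0$ for all $\theta,\theta'\in\Theta$; $P_\Theta$ is the uniform distribution on $\Theta$; $\mathcal D=\mathcal D_N$ is a distribution on $\mathbb R^{L}$; $g=g_N:\mathbb R^L\times\mathbb R^N\to\mathcal Y$ with $\mathcal Y$ finite of cardinality independent of $N$. One draws $\theta\sim P_\Theta$, independently $X_1,\dots,X_n$ i.i.d. from $\mathcal D$ ($n=n_N$), and sets $Y_i=g(X_i,\theta)$; $Y^n=(Y_i)_{i\le n}$, $X^n=(X_i)_{i\le n}$. $H$ denotes Shannon entropy, $I$ mutual information, $D$ Kullback–Leibler divergence (natural log). $Y$ denotes $g(X,\theta)$ with $X\sim\mathcal D$, $\theta\sim P_\Theta$ independent; $n^*=\lfloor H(\theta)/H(Y)\rfloor$. $P_n$ is the law of $(Y^n,X^n)$ under the model. $Q_n$ is the "null" law of $(Y^n,X^n)$ under which $X_1,\dots,X_n$ are i.i.d. from $\mathcal D$ and,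 independently of $X^n$, $Y_1,\dots,Y_n$ are i.i.d. with the law of $Y$. *)

theory Defs
  imports "HOL-Probability.Probability"
begin

text \<open>Vectors of R^k are rendered as extensional functions nat => real on {..<k}.
  All logarithms are natural: base exp 1.\<close>

definition sphere_vecs :: "nat \<Rightarrow> (nat \<Rightarrow> real) set" where
  "sphere_vecs N = {v \<in> {..<N} \<rightarrow>\<^sub>E (UNIV::real set). (\<Sum>i<N. (v i)^2) = 1}"

definition inner_vec :: "nat \<Rightarrow> (nat \<Rightarrow> real) \<Rightarrow> (nat \<Rightarrow> real) \<Rightarrow> real" where
  "inner_vec N u v = (\<Sum>i<N. u i * v i)"

definition euclid_space :: "nat \<Rightarrow> (nat \<Rightarrow> real) measure" where
  "euclid_space L = PiM {..<L} (\<lambda>_. borel)"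

definition model_measure :: "'t set \<Rightarrow> 'x measure \<Rightarrow> nat \<Rightarrow> ('t \<times> (nat \<Rightarrow> 'x)) measure" where
  "model_measure Th D n = uniform_count_measure Th \<Otimes>\<^sub>M PiM {..<n} (\<lambda>_. D)"

definition Xn_space :: "'x measure \<Rightarrow> nat \<Rightarrow> (nat \<Rightarrow> 'x) measure" where
  "Xn_space D n = PiM {..<n} (\<lambda>_. D)"

definition Yn_space :: "nat \<Rightarrow> (nat \<Rightarrow> 'y) measure" where
  "Yn_space n = PiM {..<n} (\<lambda>_. count_space UNIV)"

definition Yn_rv :: "('x \<Rightarrow> 't \<Rightarrow> 'y) \<Rightarrow> nat \<Rightarrow> ('t \<times> (nat \<Rightarrow> 'x)) \<Rightarrow> (nat \<Rightarrow> 'y)" where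
  "Yn_rv g n \<omega> = (\<lambda>i\<in>{..<n}. g (snd \<omega> i) (fst \<omega>))"

definition single_measure :: "'t set \<Rightarrow> 'x measure \<Rightarrow> ('t \<times> 'x) measure" where
  "single_measure Th D = uniform_count_measure Th \<Otimes>\<^sub>M D"

definition Y_law :: "'t set \<Rightarrow> 'x measure \<Rightarrow> ('x \<Rightarrow> 't \<Rightarrow> 'y) \<Rightarrow> 'y measure" where
  "Y_law Th D g = distr (single_measure Th D) (count_space UNIV) (\<lambda>(t, x). g x t)"

definition H_Y :: "'t set \<Rightarrow> 'x measure \<Rightarrow> ('x \<Rightarrow> 't \<Rightarrow> 'y) \<Rightarrow> real" where
  "H_Y Th D g = prob_space.entropy (single_measure Th D) (exp 1) (count_space UNIV) (\<lambda>(t, x). g x t)"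

definition H_theta :: "'t set \<Rightarrow> real" where
  "H_theta Th = prob_space.entropy (uniform_count_measure Th) (exp 1) (count_space Th) (\<lambda>t. t)"

definition n_star :: "'t set \<Rightarrow> 'x measure \<Rightarrow> ('x \<Rightarrow> 't \<Rightarrow> 'y) \<Rightarrow> nat" where
  "n_star Th D g = nat \<lfloor>H_theta Th / H_Y Th D g\<rfloor>"

definition P_law :: "'t set \<Rightarrow> 'x measure \<Rightarrow> ('x \<Rightarrow> 't \<Rightarrow> 'y) \<Rightarrow> nat \<Rightarrow> ((nat \<Rightarrow> 'y) \<times> (nat \<Rightarrow> 'x)) measure" where
  "P_law Th D g n = distr (model_measure Th D n) (Yn_space n \<Otimes>\<^sub>M Xn_space D n) (\<lambda>\<omega>. (Yn_rv g n \<omega>, snd \<omega>))"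

definition Q_law :: "'t set \<Rightarrow> 'x measure \<Rightarrow> ('x \<Rightarrow> 't \<Rightarrow> 'y) \<Rightarrow> nat \<Rightarrow> ((nat \<Rightarrow> 'y) \<times> (nat \<Rightarrow> 'x)) measure" where
  "Q_law Th D g n = PiM {..<n} (\<lambda>_. Y_law Th D g) \<Otimes>\<^sub>M Xn_space D n"

text \<open>D(P_n || Q_n) (the library's KL_divergence b M N is D(N || M)).\<close>
definition KL_PQ :: "'t set \<Rightarrow> 'x measure \<Rightarrow> ('x \<Rightarrow> 't \<Rightarrow> 'y) \<Rightarrow> nat \<Rightarrow> real" where
  "KL_PQ Th D g n = KL_divergence (exp 1) (Q_law Th D g n) (P_law Th D g n)"

definition cond_MI :: "'t set \<Rightarrow> 'x measure \<Rightarrow> ('x \<Rightarrow> 't \<Rightarrow> 'y) \<Rightarrow> nat \<Rightarrow> real" where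
  "cond_MI Th D g n = prob_space.conditional_mutual_information (model_measure Th D n) (exp 1)
     (count_space Th) (Yn_space n) (Xn_space D n) fst (Yn_rv g n) snd"

definition cond_H :: "'t set \<Rightarrow> 'x measure \<Rightarrow> ('x \<Rightarrow> 't \<Rightarrow> 'y) \<Rightarrow> nat \<Rightarrow> real" where
  "cond_H Th D g n = prob_space.conditional_entropy (model_measure Th D n) (exp 1)
     (count_space Th) (Yn_space n \<Otimes>\<^sub>M Xn_space D n) fst (\<lambda>\<omega>. (Yn_rv g n \<omega>, snd \<omega>))"

end

theory Submission
  imports Defs
begin


lemma Yn_space_eq:
  "Yn_space n = count_space (PiE {..<n} (\<lambda>_. UNIV :: 'y::finite set))"
proof (rule measure_eqI_finite[where A="PiE {..<n} (\<lambda>_. UNIV :: 'y::finite set)"])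
  let ?E = "PiE {..<n} (\<lambda>_. UNIV :: 'y::finite set)"
  have sing: "{y} = PiE {..<n} (\<lambda>i. {y i})" if "y \<in> ?E" for y
    using that by (auto simp: PiE_iff extensional_def fun_eq_iff) (metis lessThan_iff)
  have "A \<in> sets (Yn_space n)" if "A \<subseteq> ?E" for A
  proof -
    have fin: "finite A" using that by (rule finite_subset) (simp add: finite_PiE)
    have "A = (\<Union>y\<in>A. {y})" by auto
    also have "\<dots> \<in> sets (Yn_space n)"
      using fin that
      by (intro sets.finite_UN) (auto simp: Yn_space_def sing intro!: sets_PiM_I_finite)
    finally show ?thesis .
  qed
  moreover have "sets (Yn_space n) \<subseteq> Pow ?E"
    using sets.sets_into_space by (fastforce simp: Yn_space_def space_PiM)
  ultimately show "sets (Yn_space n) = Pow ?E" by auto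
  show "sets (count_space ?E) = Pow ?E" by simp
  show "finite ?E" by (simp add: finite_PiE)
  fix a assume a: "a \<in> ?E"
  have "emeasure (Yn_space n) {a} = (\<Prod>i<n. emeasure (count_space UNIV) {a i})"
  proof -
    interpret product_sigma_finite "\<lambda>_::nat. count_space (UNIV::'y set)"
      by (simp add: product_sigma_finite_def sigma_finite_measure_count_space_finite)
    show ?thesis unfolding Yn_space_def sing[OF a]
      by (subst emeasure_PiM) auto
  qed
  also have "\<dots> = 1" by simp
  finally show "emeasure (Yn_space n) {a} = emeasure (count_space ?E) {a}"
    using a by simp
qed

lemma nn_integral_count_pair:
  assumes A: "finite A" and M2: "sigma_finite_measure M2"
    and h: "h \<in> borel_measurable (count_space A \<Otimes>\<^sub>M M2)"
  shows "(\<integral>\<^sup>+z. h z \<partial>(count_space A \<Otimes>\<^sub>M M2)) = (\<Sum>a\<in>A. \<integral>\<^sup>+y. h (a, y) \<partial>M2)"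
proof -
  interpret M2: sigma_finite_measure M2 by fact
  show ?thesis
    by (simp add: M2.nn_integral_fst[OF h, symmetric] nn_integral_count_space_finite[OF A])
qed

lemma nn_integral_unif_pair:
  assumes A: "finite A" and ne: "A \<noteq> {}" and M2: "sigma_finite_measure M2"
    and h: "h \<in> borel_measurable (count_space A \<Otimes>\<^sub>M M2)"
  shows "(\<integral>\<^sup>+z. h z \<partial>(uniform_count_measure A \<Otimes>\<^sub>M M2))
     = (\<Sum>a\<in>A. ennreal (1 / real (card A)) * \<integral>\<^sup>+y. h (a, y) \<partial>M2)"
proof -
  interpret M2: sigma_finite_measure M2 by fact
  have h': "h \<in> borel_measurable (uniform_count_measure A \<Otimes>\<^sub>M M2)"
    using h by (simp add: measurable_cong_sets[OF sets_pair_measure_cong[OF sets_uniform_count_measure_count_space refl] refl])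
  have "0 < card A" using A ne by (simp add: card_gt_0_iff)
  then have e: "(1 / of_nat (card A) :: ennreal) = ennreal (1 / real (card A))"
    using divide_ennreal[of 1 "real (card A)"] by (simp add: ennreal_of_nat_eq_real_of_nat)
  have "(\<integral>\<^sup>+z. h z \<partial>(uniform_count_measure A \<Otimes>\<^sub>M M2))
     = (\<integral>\<^sup>+a. (\<integral>\<^sup>+y. h (a, y) \<partial>M2) \<partial>uniform_count_measure A)"
    by (rule M2.nn_integral_fst[OF h', symmetric])
  also have "\<dots> = (\<Sum>a\<in>A. ennreal (1 / real (card A)) * \<integral>\<^sup>+y. h (a, y) \<partial>M2)"
    unfolding uniform_count_measure_def by (rule nn_integral_point_measure_finite[OF A])
  finally show ?thesis .
qed

lemma distributedI_nn:
  assumes X: "X \<in> M \<rightarrow>\<^sub>M N" and p: "p \<in> borel_measurable N"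
    and eq: "\<And>A. A \<in> sets N \<Longrightarrow> (\<integral>\<^sup>+z. p z * indicator A z \<partial>N) = (\<integral>\<^sup>+\<omega>. indicator A (X \<omega>) \<partial>M)"
  shows "distributed M N X p"
  unfolding distributed_def
proof (intro conjI X p measure_eqI)
  fix A assume A: "A \<in> sets (distr M N X)"
  then have A': "A \<in> sets N" by simp
  have "emeasure (distr M N X) A = emeasure M (X -` A \<inter> space M)"
    using A' X by (simp add: emeasure_distr)
  also have "\<dots> = (\<integral>\<^sup>+\<omega>. indicator (X -` A \<inter> space M) \<omega> \<partial>M)"
    using A' X by (simp add: measurable_sets)
  also have "\<dots> = (\<integral>\<^sup>+\<omega>. indicator A (X \<omega>) \<partial>M)"
    by (intro nn_integral_cong) (auto split: split_indicator)
  also have "\<dots> = emeasure (density N p) A"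
    using A' p by (simp add: emeasure_density eq)
  finally show "emeasure (distr M N X) A = emeasure (density N p) A" .
qed simp

lemma pred_eq_count:
  assumes f: "f \<in> M \<rightarrow>\<^sub>M count_space A" and h: "h \<in> M \<rightarrow>\<^sub>M count_space A" and A: "countable A"
  shows "(\<lambda>x. f x = h x) \<in> M \<rightarrow>\<^sub>M count_space UNIV"
proof -
  have "(\<lambda>x. (\<lambda>a x. f x = a) (h x) x) \<in> M \<rightarrow>\<^sub>M count_space UNIV"
  proof (rule measurable_compose_countable'[OF _ h A])
    fix a assume "a \<in> A"
    show "(\<lambda>x. f x = a) \<in> M \<rightarrow>\<^sub>M count_space UNIV"
      using measurable_compose[OF f measurable_count_space[of "\<lambda>y. y = a" A]] by simp
  qed
  then show ?thesis by simp
qed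




locale chan =
  fixes T :: "'t set" and mu :: "'x measure" and g :: "'x \<Rightarrow> 't \<Rightarrow> 'y::finite" and n :: nat
  assumes finT: "finite T" and neT: "T \<noteq> {}" and prob_mu: "prob_space mu"
    and g_meas: "\<And>t. t \<in> T \<Longrightarrow> (\<lambda>x. g x t) \<in> mu \<rightarrow>\<^sub>M count_space UNIV"
begin

abbreviation "U \<equiv> uniform_count_measure T"
abbreviation "Xs \<equiv> Xn_space mu n"
abbreviation "Om \<equiv> model_measure T mu n"
abbreviation "E \<equiv> PiE {..<n} (\<lambda>_. UNIV :: 'y set)"
abbreviation "F \<equiv> Yn_rv g n"
abbreviation "cT \<equiv> count_space T"
abbreviation "cE \<equiv> count_space E"
abbreviation "m \<equiv> real (card T)"

lemma m_pos: "0 < m" using finT neT by (simp add: card_gt_0_iff)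

lemma prob_Xs: "prob_space Xs"
  unfolding Xn_space_def by (rule prob_space_PiM) (rule prob_mu)

lemma sf_Xs: "sigma_finite_measure Xs"
  using prob_Xs by (simp add: prob_space_imp_sigma_finite)

lemma prob_U: "prob_space U" by (rule prob_space_uniform_count_measure[OF finT neT])

lemma Om_eq: "Om = U \<Otimes>\<^sub>M Xs" by (simp add: model_measure_def Xn_space_def)

lemma prob_Om: "prob_space Om"
  unfolding Om_eq by (rule prob_space_pair[OF prob_U prob_Xs])

lemma sets_Om: "sets Om = sets (cT \<Otimes>\<^sub>M Xs)"
  unfolding Om_eq by (rule sets_pair_measure_cong[OF sets_uniform_count_measure_count_space refl])

lemma space_Om: "space Om = T \<times> space Xs"
  unfolding Om_eq by (simp add: space_pair_measure space_uniform_count_measure)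

lemma fin_E: "finite E" by (simp add: finite_PiE)

lemma F_in_E: "F w \<in> E"
  by (simp add: Yn_rv_def)

lemma F_meas_Yn: "F \<in> (cT \<Otimes>\<^sub>M Xs) \<rightarrow>\<^sub>M Yn_space n"
  unfolding Yn_space_def Yn_rv_def
proof (rule measurable_restrict)
  fix i assume i: "i \<in> {..<n}"
  have "(\<lambda>w. (\<lambda>t w. g (snd w i) t) (fst w) w) \<in> (cT \<Otimes>\<^sub>M Xs) \<rightarrow>\<^sub>M count_space UNIV"
  proof (rule measurable_compose_countable'[where I=T])
    fix t assume t: "t \<in> T"
    have "(\<lambda>w. snd w i) \<in> (cT \<Otimes>\<^sub>M Xs) \<rightarrow>\<^sub>M mu"
      using i unfolding Xn_space_def by measurable
    then show "(\<lambda>w. g (snd w i) t) \<in> (cT \<Otimes>\<^sub>M Xs) \<rightarrow>\<^sub>M count_space UNIV"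
      using measurable_compose[OF _ g_meas[OF t]] by blast
  qed (auto simp: finT countable_finite)
  then show "(\<lambda>w. g (snd w i) (fst w)) \<in> (cT \<Otimes>\<^sub>M Xs) \<rightarrow>\<^sub>M count_space UNIV" by simp
qed

lemma F_meas: "F \<in> (cT \<Otimes>\<^sub>M Xs) \<rightarrow>\<^sub>M cE"
  using F_meas_Yn by (simp add: Yn_space_eq)

lemma F_meas_Om: "F \<in> Om \<rightarrow>\<^sub>M cE"
  using F_meas by (simp add: measurable_cong_sets[OF sets_Om refl])

lemma L1:
  assumes h: "h \<in> borel_measurable (cT \<Otimes>\<^sub>M Xs)"
  shows "(\<integral>\<^sup>+w. h w \<partial>Om) = (\<Sum>t\<in>T. ennreal (1 / m) * \<integral>\<^sup>+x. h (t, x) \<partial>Xs)"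
  unfolding Om_eq by (rule nn_integral_unif_pair[OF finT neT sf_Xs h])


lemma sf_cT: "sigma_finite_measure cT" by (rule sigma_finite_measure_count_space_finite[OF finT])
lemma sf_cE: "sigma_finite_measure cE" by (rule sigma_finite_measure_count_space_finite[OF fin_E])
lemma sf_EX: "sigma_finite_measure (cE \<Otimes>\<^sub>M Xs)"
proof -
  interpret a: sigma_finite_measure cE by (rule sf_cE)
  interpret b: sigma_finite_measure Xs by (rule sf_Xs)
  interpret pair_sigma_finite cE Xs ..
  show ?thesis ..
qed

definition pJ :: "'t \<times> (nat \<Rightarrow> 'y) \<times> (nat \<Rightarrow> 'x) \<Rightarrow> real" where
  "pJ z = (if F (fst z, snd (snd z)) = fst (snd z) then 1 / m else 0)"

definition pYX :: "(nat \<Rightarrow> 'y) \<times> (nat \<Rightarrow> 'x) \<Rightarrow> real" where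
  "pYX z = (\<Sum>t\<in>T. pJ (t, z))"

lemma pJ_nn: "0 \<le> pJ z" by (simp add: pJ_def)
lemma pYX_nn: "0 \<le> pYX z" by (simp add: pYX_def sum_nonneg pJ_nn)

lemma pJ_meas: "pJ \<in> borel_measurable (cT \<Otimes>\<^sub>M (cE \<Otimes>\<^sub>M Xs))"
proof -
  have 1: "(\<lambda>z. F (fst z, snd (snd z))) \<in> (cT \<Otimes>\<^sub>M (cE \<Otimes>\<^sub>M Xs)) \<rightarrow>\<^sub>M cE"
    by (rule measurable_compose[OF _ F_meas]) measurable
  have 2: "(\<lambda>z. fst (snd z)) \<in> (cT \<Otimes>\<^sub>M (cE \<Otimes>\<^sub>M Xs)) \<rightarrow>\<^sub>M cE" by measurable
  have 3: "{z \<in> space (cT \<Otimes>\<^sub>M (cE \<Otimes>\<^sub>M Xs)). F (fst z, snd (snd z)) = fst (snd z)} \<in> sets (cT \<Otimes>\<^sub>M (cE \<Otimes>\<^sub>M Xs))"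
    using pred_eq_count[OF 1 2] fin_E by (simp add: pred_def countable_finite)
  show ?thesis unfolding pJ_def
    by (rule measurable_If[OF _ _ 3]) auto
qed

lemma pJ_meas2: "t \<in> T \<Longrightarrow> (\<lambda>v. pJ (t, v)) \<in> borel_measurable (cE \<Otimes>\<^sub>M Xs)"
  by (rule measurable_compose[OF _ pJ_meas], rule measurable_Pair1') simp

lemma pYX_meas: "pYX \<in> borel_measurable (cE \<Otimes>\<^sub>M Xs)"
  unfolding pYX_def by (intro borel_measurable_sum pJ_meas2)

abbreviation "G \<equiv> (\<lambda>w. (fst w, F w, snd w))"

lemma G_meas: "G \<in> (cT \<Otimes>\<^sub>M Xs) \<rightarrow>\<^sub>M (cT \<Otimes>\<^sub>M (cE \<Otimes>\<^sub>M Xs))"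
  using F_meas by measurable

lemma G_meas_Om: "G \<in> Om \<rightarrow>\<^sub>M (cT \<Otimes>\<^sub>M (cE \<Otimes>\<^sub>M Xs))"
  using G_meas by (simp add: measurable_cong_sets[OF sets_Om refl])

lemma FX_meas: "(\<lambda>w. (F w, snd w)) \<in> (cT \<Otimes>\<^sub>M Xs) \<rightarrow>\<^sub>M (cE \<Otimes>\<^sub>M Xs)"
  using F_meas by measurable

lemma FX_meas_Om: "(\<lambda>w. (F w, snd w)) \<in> Om \<rightarrow>\<^sub>M (cE \<Otimes>\<^sub>M Xs)"
  using FX_meas by (simp add: measurable_cong_sets[OF sets_Om refl])

lemma pc: "t \<in> T \<Longrightarrow> (\<lambda>v. (t, v)) \<in> N \<rightarrow>\<^sub>M (cT \<Otimes>\<^sub>M N)"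
  by (rule measurable_Pair1') simp

lemma D5:
  assumes h: "h \<in> borel_measurable (cT \<Otimes>\<^sub>M (cE \<Otimes>\<^sub>M Xs))"
  shows "(\<integral>\<^sup>+z. ennreal (pJ z) * h z \<partial>(cT \<Otimes>\<^sub>M (cE \<Otimes>\<^sub>M Xs))) = (\<integral>\<^sup>+w. h (G w) \<partial>Om)"
proof -
  have hm: "(\<lambda>z. ennreal (pJ z) * h z) \<in> borel_measurable (cT \<Otimes>\<^sub>M (cE \<Otimes>\<^sub>M Xs))"
    using pJ_meas h by measurable
  have inner: "(\<integral>\<^sup>+v. ennreal (pJ (t, v)) * h (t, v) \<partial>(cE \<Otimes>\<^sub>M Xs))
      = ennreal (1 / m) * \<integral>\<^sup>+x. h (G (t, x)) \<partial>Xs" if t: "t \<in> T" for t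
  proof -
    have m1: "(\<lambda>v. ennreal (pJ (t, v)) * h (t, v)) \<in> borel_measurable (cE \<Otimes>\<^sub>M Xs)"
      by (rule measurable_compose[OF pc[OF t] hm])
    have "(\<integral>\<^sup>+v. ennreal (pJ (t, v)) * h (t, v) \<partial>(cE \<Otimes>\<^sub>M Xs))
        = (\<Sum>y\<in>E. \<integral>\<^sup>+x. ennreal (pJ (t, y, x)) * h (t, y, x) \<partial>Xs)"
      by (rule nn_integral_count_pair[OF fin_E sf_Xs m1])
    also have "\<dots> = (\<integral>\<^sup>+x. (\<Sum>y\<in>E. ennreal (pJ (t, y, x)) * h (t, y, x)) \<partial>Xs)"
    proof (rule nn_integral_sum[symmetric])
      fix y assume "y \<in> E"
      then show "(\<lambda>x. ennreal (pJ (t, y, x)) * h (t, y, x)) \<in> borel_measurable Xs"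
        by (intro measurable_compose[OF _ hm] measurable_compose[OF _ pc[OF t]] measurable_Pair1') simp
    qed
    also have "\<dots> = (\<integral>\<^sup>+x. ennreal (1 / m) * h (G (t, x)) \<partial>Xs)"
    proof (rule nn_integral_cong)
      fix x
      have "(\<Sum>y\<in>E. ennreal (pJ (t, y, x)) * h (t, y, x))
          = (\<Sum>y\<in>E. if F (t, x) = y then ennreal (1 / m) * h (t, y, x) else 0)"
        by (intro sum.cong) (auto simp: pJ_def)
      also have "\<dots> = ennreal (1 / m) * h (t, F (t, x), x)"
        using F_in_E[of "(t, x)"] fin_E by (simp add: sum.delta)
      finally show "(\<Sum>y\<in>E. ennreal (pJ (t, y, x)) * h (t, y, x)) = ennreal (1 / m) * h (G (t, x))"
        by simp
    qed
    also have "\<dots> = ennreal (1 / m) * \<integral>\<^sup>+x. h (G (t, x)) \<partial>Xs"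
    proof (rule nn_integral_cmult)
      show "(\<lambda>x. h (G (t, x))) \<in> borel_measurable Xs"
        by (rule measurable_compose[OF _ h], rule measurable_compose[OF pc[OF t] G_meas])
    qed
    finally show ?thesis .
  qed
  have "(\<integral>\<^sup>+z. ennreal (pJ z) * h z \<partial>(cT \<Otimes>\<^sub>M (cE \<Otimes>\<^sub>M Xs)))
      = (\<Sum>t\<in>T. \<integral>\<^sup>+v. ennreal (pJ (t, v)) * h (t, v) \<partial>(cE \<Otimes>\<^sub>M Xs))"
    by (rule nn_integral_count_pair[OF finT sf_EX hm])
  also have "\<dots> = (\<Sum>t\<in>T. ennreal (1 / m) * \<integral>\<^sup>+x. h (G (t, x)) \<partial>Xs)"
    by (intro sum.cong refl inner)
  also have "\<dots> = (\<integral>\<^sup>+w. h (G w) \<partial>Om)"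
    by (rule L1[symmetric]) (rule measurable_compose[OF G_meas h])
  finally show ?thesis .
qed


lemma D4:
  assumes h: "h \<in> borel_measurable (cE \<Otimes>\<^sub>M Xs)"
  shows "(\<integral>\<^sup>+z. ennreal (pYX z) * h z \<partial>(cE \<Otimes>\<^sub>M Xs)) = (\<integral>\<^sup>+w. h (F w, snd w) \<partial>Om)"
proof -
  have hs: "(\<lambda>z. h (snd z)) \<in> borel_measurable (cT \<Otimes>\<^sub>M (cE \<Otimes>\<^sub>M Xs))"
    using h by measurable
  have hm: "(\<lambda>z. ennreal (pJ z) * h (snd z)) \<in> borel_measurable (cT \<Otimes>\<^sub>M (cE \<Otimes>\<^sub>M Xs))"
    using pJ_meas hs by measurable
  have "(\<integral>\<^sup>+z. ennreal (pYX z) * h z \<partial>(cE \<Otimes>\<^sub>M Xs))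
      = (\<integral>\<^sup>+z. (\<Sum>t\<in>T. ennreal (pJ (t, z)) * h z) \<partial>(cE \<Otimes>\<^sub>M Xs))"
    by (intro nn_integral_cong)
       (simp add: pYX_def sum_ennreal pJ_nn sum_distrib_right[symmetric])
  also have "\<dots> = (\<Sum>t\<in>T. \<integral>\<^sup>+z. ennreal (pJ (t, z)) * h z \<partial>(cE \<Otimes>\<^sub>M Xs))"
  proof (rule nn_integral_sum)
    fix t assume t: "t \<in> T"
    show "(\<lambda>z. ennreal (pJ (t, z)) * h z) \<in> borel_measurable (cE \<Otimes>\<^sub>M Xs)"
      using pJ_meas2[OF t] h by measurable
  qed
  also have "\<dots> = (\<integral>\<^sup>+z. ennreal (pJ z) * h (snd z) \<partial>(cT \<Otimes>\<^sub>M (cE \<Otimes>\<^sub>M Xs)))"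
    by (rule nn_integral_count_pair[OF finT sf_EX hm, symmetric, simplified])
  also have "\<dots> = (\<integral>\<^sup>+w. h (F w, snd w) \<partial>Om)"
    using D5[OF hs] by simp
  finally show ?thesis .
qed

lemma D3:
  assumes h: "h \<in> borel_measurable (cT \<Otimes>\<^sub>M Xs)"
  shows "(\<integral>\<^sup>+z. ennreal (1 / m) * h z \<partial>(cT \<Otimes>\<^sub>M Xs)) = (\<integral>\<^sup>+w. h (fst w, snd w) \<partial>Om)"
proof -
  have hm: "(\<lambda>z. ennreal (1 / m) * h z) \<in> borel_measurable (cT \<Otimes>\<^sub>M Xs)" using h by measurable
  have "(\<integral>\<^sup>+z. ennreal (1 / m) * h z \<partial>(cT \<Otimes>\<^sub>M Xs)) = (\<Sum>t\<in>T. \<integral>\<^sup>+x. ennreal (1 / m) * h (t, x) \<partial>Xs)"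
    by (rule nn_integral_count_pair[OF finT sf_Xs hm])
  also have "\<dots> = (\<Sum>t\<in>T. ennreal (1 / m) * \<integral>\<^sup>+x. h (t, x) \<partial>Xs)"
    by (intro sum.cong refl nn_integral_cmult measurable_compose[OF pc h])
  also have "\<dots> = (\<integral>\<^sup>+w. h w \<partial>Om)" by (rule L1[OF h, symmetric])
  finally show ?thesis by simp
qed

lemma Xs_space_nn: "(\<integral>\<^sup>+x. c \<partial>Xs) = c"
proof -
  interpret prob_space Xs by (rule prob_Xs)
  show ?thesis by (simp add: emeasure_space_1)
qed

lemma sum_m: "(\<Sum>t\<in>T. ennreal (1 / m) * c) = c"
proof -
  have "(\<Sum>t\<in>T. ennreal (1 / m) * c) = of_nat (card T) * (ennreal (1 / m) * c)" by simp
  also have "\<dots> = (ennreal m * ennreal (1 / m)) * c"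
    by (simp add: ennreal_of_nat_eq_real_of_nat mult.assoc)
  also have "\<dots> = ennreal (m * (1 / m)) * c"
    by (subst ennreal_mult) auto
  also have "\<dots> = c" using m_pos by simp
  finally show ?thesis .
qed

lemma D1:
  shows "(\<integral>\<^sup>+t. ennreal (1 / m) * h t \<partial>cT) = (\<integral>\<^sup>+w. h (fst w) \<partial>Om)"
proof -
  have hb: "h \<in> borel_measurable cT" by simp
  have "(\<integral>\<^sup>+w. h (fst w) \<partial>Om) = (\<Sum>t\<in>T. ennreal (1 / m) * \<integral>\<^sup>+x. h t \<partial>Xs)"
    using L1[of "\<lambda>w. h (fst w)", OF measurable_compose[OF measurable_fst hb]] by simp
  also have "\<dots> = (\<Sum>t\<in>T. ennreal (1 / m) * h t)"
    by (simp add: prob_space.emeasure_space_1[OF prob_Xs])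
  finally show ?thesis by (simp add: nn_integral_count_space_finite[OF finT])
qed

lemma D2:
  assumes h: "h \<in> borel_measurable Xs"
  shows "(\<integral>\<^sup>+x. ennreal 1 * h x \<partial>Xs) = (\<integral>\<^sup>+w. h (snd w) \<partial>Om)"
proof -
  have "(\<integral>\<^sup>+w. h (snd w) \<partial>Om) = (\<Sum>t\<in>T. ennreal (1 / m) * \<integral>\<^sup>+x. h x \<partial>Xs)"
    using L1[of "\<lambda>w. h (snd w)", OF measurable_compose[OF measurable_snd h]] by simp
  also have "\<dots> = (\<integral>\<^sup>+x. h x \<partial>Xs)" by (rule sum_m)
  finally show ?thesis by simp
qed

lemma B1: "distributed Om cT fst (\<lambda>t. ennreal (1 / m))"
proof (rule distributedI_nn)
  show "fst \<in> Om \<rightarrow>\<^sub>M cT" by (simp add: measurable_cong_sets[OF sets_Om refl])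
  fix A assume "A \<in> sets cT"
  show "(\<integral>\<^sup>+z. ennreal (1 / m) * indicator A z \<partial>cT) = (\<integral>\<^sup>+w. indicator A (fst w) \<partial>Om)"
    by (rule D1)
qed simp

lemma B2: "distributed Om Xs snd (\<lambda>x. ennreal 1)"
proof (rule distributedI_nn)
  show "snd \<in> Om \<rightarrow>\<^sub>M Xs" by (simp add: measurable_cong_sets[OF sets_Om refl])
  fix A assume "A \<in> sets Xs"
  then show "(\<integral>\<^sup>+z. ennreal 1 * indicator A z \<partial>Xs) = (\<integral>\<^sup>+w. indicator A (snd w) \<partial>Om)"
    by (intro D2) simp
qed simp

lemma B3: "distributed Om (cT \<Otimes>\<^sub>M Xs) (\<lambda>w. (fst w, snd w)) (\<lambda>z. ennreal (1 / m))"
proof (rule distributedI_nn)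
  show "(\<lambda>w. (fst w, snd w)) \<in> Om \<rightarrow>\<^sub>M (cT \<Otimes>\<^sub>M Xs)" by (simp add: measurable_cong_sets[OF sets_Om refl])
  fix A assume "A \<in> sets (cT \<Otimes>\<^sub>M Xs)"
  then show "(\<integral>\<^sup>+z. ennreal (1 / m) * indicator A z \<partial>(cT \<Otimes>\<^sub>M Xs)) = (\<integral>\<^sup>+w. indicator A (fst w, snd w) \<partial>Om)"
    by (intro D3) simp
qed simp

lemma B4: "distributed Om (cE \<Otimes>\<^sub>M Xs) (\<lambda>w. (F w, snd w)) (\<lambda>z. ennreal (pYX z))"
proof (rule distributedI_nn)
  show "(\<lambda>w. (F w, snd w)) \<in> Om \<rightarrow>\<^sub>M (cE \<Otimes>\<^sub>M Xs)" by (rule FX_meas_Om)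
  fix A assume "A \<in> sets (cE \<Otimes>\<^sub>M Xs)"
  then show "(\<integral>\<^sup>+z. ennreal (pYX z) * indicator A z \<partial>(cE \<Otimes>\<^sub>M Xs)) = (\<integral>\<^sup>+w. indicator A (F w, snd w) \<partial>Om)"
    by (intro D4) simp
qed (use pYX_meas in simp)

lemma B5: "distributed Om (cT \<Otimes>\<^sub>M (cE \<Otimes>\<^sub>M Xs)) G (\<lambda>z. ennreal (pJ z))"
proof (rule distributedI_nn)
  show "G \<in> Om \<rightarrow>\<^sub>M (cT \<Otimes>\<^sub>M (cE \<Otimes>\<^sub>M Xs))" by (rule G_meas_Om)
  fix A assume "A \<in> sets (cT \<Otimes>\<^sub>M (cE \<Otimes>\<^sub>M Xs))"
  then show "(\<integral>\<^sup>+z. ennreal (pJ z) * indicator A z \<partial>(cT \<Otimes>\<^sub>M (cE \<Otimes>\<^sub>M Xs))) = (\<integral>\<^sup>+w. indicator A (G w) \<partial>Om)"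
    by (intro D5) simp
qed (use pJ_meas in simp)


lemma info_Om: "information_space Om (exp 1)"
  using prob_Om by (simp add: information_space_def information_space_axioms_def)

lemma p_bounds:
  assumes w: "w \<in> space Om"
  shows "1 / m \<le> pYX (F w, snd w)" "pYX (F w, snd w) \<le> 1"
proof -
  obtain t x where wt: "w = (t, x)" and t: "t \<in> T" using w space_Om by auto
  have "pJ (t, F w, snd w) \<le> pYX (F w, snd w)"
    unfolding pYX_def by (rule member_le_sum[OF t _ finT]) (simp add: pJ_nn)
  moreover have "pJ (t, F w, snd w) = 1 / m" using wt by (simp add: pJ_def)
  ultimately show "1 / m \<le> pYX (F w, snd w)" by simp
  have "pYX (F w, snd w) \<le> (\<Sum>t\<in>T. 1 / m)"
    unfolding pYX_def by (rule sum_mono) (simp add: pJ_def)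
  also have "\<dots> = 1" using m_pos by simp
  finally show "pYX (F w, snd w) \<le> 1" .
qed

definition "aa = (\<integral>w. ln (pYX (F w, snd w)) \<partial>Om)"

lemma lnp_meas: "(\<lambda>w. ln (pYX (F w, snd w))) \<in> borel_measurable Om"
  using measurable_compose[OF FX_meas_Om pYX_meas] by measurable

lemma lnp_int: "integrable Om (\<lambda>w. ln (pYX (F w, snd w)))"
proof -
  interpret prob_space Om by (rule prob_Om)
  show ?thesis
  proof (rule integrable_const_bound[where B="ln m"])
    show "AE w in Om. norm (ln (pYX (F w, snd w))) \<le> ln m"
    proof (rule AE_I2)
      fix w assume w: "w \<in> space Om"
      note b = p_bounds[OF w]
      have pos: "0 < pYX (F w, snd w)" using b(1) m_pos by (smt (verit) divide_pos_pos)
      have "ln (pYX (F w, snd w)) \<le> 0" using b(2) pos by simp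
      moreover have "ln (1 / m) \<le> ln (pYX (F w, snd w))"
        using b(1) m_pos pos by (subst ln_le_cancel_iff) auto
      moreover have "ln (1 / m) = - ln m" using m_pos by (simp add: ln_div)
      ultimately show "norm (ln (pYX (F w, snd w))) \<le> ln m" by simp
    qed
  qed (rule lnp_meas)
qed

lemma MI0: "prob_space.mutual_information Om (exp 1) cT Xs fst snd = 0"
proof -
  interpret information_space Om "exp 1" by (rule info_Om)
  show ?thesis
    by (rule mutual_information_eq_0[OF sf_cT sf_Xs, where Px="\<lambda>_. 1 / m" and Py="\<lambda>_. 1" and Pxy="\<lambda>_. 1 / m"])
       (use B1 B2 B3 in auto)
qed

lemma MI1: "prob_space.mutual_information Om (exp 1) cT (cE \<Otimes>\<^sub>M Xs) fst (\<lambda>w. (F w, snd w)) = - aa"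
proof -
  interpret information_space Om "exp 1" by (rule info_Om)
  have "mutual_information (exp 1) cT (cE \<Otimes>\<^sub>M Xs) fst (\<lambda>w. (F w, snd w))
      = (\<integral>z. pJ z * log (exp 1) (pJ z / (1 / m * pYX (snd z))) \<partial>(cT \<Otimes>\<^sub>M (cE \<Otimes>\<^sub>M Xs)))"
    using mutual_information_distr[OF sf_cT sf_EX B1 _ B4 _ B5] pYX_nn pJ_nn m_pos by simp
  also have "\<dots> = (\<integral>w. log (exp 1) (pJ (G w) / (1 / m * pYX (snd (G w)))) \<partial>Om)"
    by (rule distributed_integral[OF B5]) (use pJ_meas pYX_meas pJ_nn in measurable)
  also have "\<dots> = (\<integral>w. - ln (pYX (F w, snd w)) \<partial>Om)"
  proof (rule Bochner_Integration.integral_cong[OF refl])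
    fix w assume w: "w \<in> space Om"
    have "pJ (G w) = 1 / m" by (simp add: pJ_def)
    then show "log (exp 1) (pJ (G w) / (1 / m * pYX (snd (G w)))) = - ln (pYX (F w, snd w))"
      using m_pos p_bounds[OF w] by (simp add: log_ln[symmetric] ln_div)
  qed
  also have "\<dots> = - aa" by (simp add: aa_def)
  finally show ?thesis .
qed


lemma CH: "prob_space.conditional_entropy Om (exp 1) cT (cE \<Otimes>\<^sub>M Xs) fst (\<lambda>w. (F w, snd w)) = ln m + aa"
proof -
  interpret information_space Om "exp 1" by (rule info_Om)
  have "conditional_entropy (exp 1) cT (cE \<Otimes>\<^sub>M Xs) fst (\<lambda>w. (F w, snd w))
      = - (\<integral>z. pJ z * log (exp 1) (pJ z / pYX (snd z)) \<partial>(cT \<Otimes>\<^sub>M (cE \<Otimes>\<^sub>M Xs)))"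
    using conditional_entropy_generic_eq[OF sf_cT sf_EX B4 _ B5] pYX_nn pJ_nn
    by (simp add: split_beta')
  also have "(\<integral>z. pJ z * log (exp 1) (pJ z / pYX (snd z)) \<partial>(cT \<Otimes>\<^sub>M (cE \<Otimes>\<^sub>M Xs)))
      = (\<integral>w. log (exp 1) (pJ (G w) / pYX (snd (G w))) \<partial>Om)"
    by (rule distributed_integral[OF B5]) (use pJ_meas pYX_meas pJ_nn in measurable)
  also have "\<dots> = (\<integral>w. - ln m + - ln (pYX (F w, snd w)) \<partial>Om)"
  proof (rule Bochner_Integration.integral_cong[OF refl])
    fix w assume w: "w \<in> space Om"
    have "pJ (G w) = 1 / m" by (simp add: pJ_def)
    moreover have "0 < pYX (F w, snd w)" using p_bounds(1)[OF w] m_pos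
      by (smt (verit) divide_pos_pos)
    ultimately show "log (exp 1) (pJ (G w) / pYX (snd (G w))) = - ln m + - ln (pYX (F w, snd w))"
      using m_pos by (simp add: log_ln[symmetric] ln_div ln_mult)
  qed
  also have "\<dots> = - ln m + - aa"
  proof -
    interpret prob_space Om by (rule prob_Om)
    show ?thesis
      using lnp_int by (simp add: aa_def prob_space)
  qed
  finally show ?thesis by simp
qed

lemma HT: "H_theta T = ln m"
proof -
  interpret information_space U "exp 1"
    using prob_U by (simp add: information_space_def information_space_axioms_def)
  have "distributed U cT (\<lambda>t. t) (\<lambda>x. ennreal (indicator T x / measure cT T))"
  proof (rule distributedI_nn)
    show "(\<lambda>t. t) \<in> U \<rightarrow>\<^sub>M cT" by (simp add: measurable_cong_sets[OF sets_uniform_count_measure_count_space refl])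
    fix A assume A: "A \<in> sets cT"
    have "(\<integral>\<^sup>+z. ennreal (indicator T z / measure cT T) * indicator A z \<partial>cT)
        = (\<Sum>t\<in>T. ennreal (1 / m) * indicator A t)"
      using finT by (simp add: nn_integral_count_space_finite measure_count_space)
    also have "\<dots> = (\<integral>\<^sup>+t. indicator A t \<partial>U)"
      unfolding uniform_count_measure_def by (simp add: nn_integral_point_measure_finite[OF finT])
    finally show "(\<integral>\<^sup>+z. ennreal (indicator T z / measure cT T) * indicator A z \<partial>cT) = (\<integral>\<^sup>+t. indicator A t \<partial>U)" .
  qed simp
  from entropy_uniform[OF this] show ?thesis
    using finT by (simp add: H_theta_def measure_count_space log_ln[symmetric])
qed


abbreviation "SM \<equiv> single_measure T mu"
abbreviation "Y1 \<equiv> (\<lambda>(t, x). g x t)"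
definition "pY y = measure SM (Y1 -` {y} \<inter> space SM)"

lemma prob_single: "prob_space SM"
  unfolding single_measure_def by (rule prob_space_pair[OF prob_U prob_mu])

lemma sets_single: "sets SM = sets (cT \<Otimes>\<^sub>M mu)"
  unfolding single_measure_def by (rule sets_pair_measure_cong[OF sets_uniform_count_measure_count_space refl])

lemma sf_mu: "sigma_finite_measure mu"
  using prob_mu by (simp add: prob_space_imp_sigma_finite)

lemma Y1_meas': "Y1 \<in> (cT \<Otimes>\<^sub>M mu) \<rightarrow>\<^sub>M count_space UNIV"
proof -
  have "(\<lambda>w. (\<lambda>t w. g (snd w) t) (fst w) w) \<in> (cT \<Otimes>\<^sub>M mu) \<rightarrow>\<^sub>M count_space UNIV"
  proof (rule measurable_compose_countable'[where I=T])
    fix t assume t: "t \<in> T"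
    show "(\<lambda>w. g (snd w) t) \<in> (cT \<Otimes>\<^sub>M mu) \<rightarrow>\<^sub>M count_space UNIV"
      by (rule measurable_compose[OF measurable_snd g_meas[OF t]])
  qed (auto simp: finT countable_finite)
  then show ?thesis by (simp add: split_beta')
qed

lemma Y1_meas: "Y1 \<in> SM \<rightarrow>\<^sub>M count_space UNIV"
  using Y1_meas' by (simp add: measurable_cong_sets[OF sets_single refl])

lemma emeasure_distr_nn:
  assumes X: "X \<in> M \<rightarrow>\<^sub>M N" and A: "A \<in> sets N"
  shows "emeasure (distr M N X) A = (\<integral>\<^sup>+w. indicator A (X w) \<partial>M)"
proof -
  have "emeasure (distr M N X) A = emeasure M (X -` A \<inter> space M)"
    using A X by (simp add: emeasure_distr)
  also have "\<dots> = (\<integral>\<^sup>+\<omega>. indicator (X -` A \<inter> space M) \<omega> \<partial>M)"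
    using A X by (simp add: measurable_sets)
  also have "\<dots> = (\<integral>\<^sup>+\<omega>. indicator A (X \<omega>) \<partial>M)"
    by (intro nn_integral_cong) (auto split: split_indicator)
  finally show ?thesis .
qed

lemma pY_nn: "0 \<le> pY y" by (simp add: pY_def)

lemma B6: "distributed SM (count_space UNIV) Y1 (\<lambda>y. ennreal (pY y))"
proof (rule distributedI_nn[OF Y1_meas])
  interpret prob_space SM by (rule prob_single)
  fix A :: "'y set"
  have sets_y: "Y1 -` {y} \<inter> space SM \<in> sets SM" for y
    using Y1_meas by (rule measurable_sets) simp
  have "(\<integral>\<^sup>+w. indicator A (Y1 w) \<partial>SM)
      = (\<integral>\<^sup>+w. (\<Sum>y\<in>UNIV. indicator A y * indicator (Y1 -` {y} \<inter> space SM) w) \<partial>SM)"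
  proof (rule nn_integral_cong)
    fix w assume w: "w \<in> space SM"
    have "(\<Sum>y\<in>UNIV. indicator A y * indicator (Y1 -` {y} \<inter> space SM) w :: ennreal)
        = (\<Sum>y\<in>UNIV. if Y1 w = y then indicator A y else 0)"
      using w by (intro sum.cong) (auto split: split_indicator)
    also have "\<dots> = indicator A (Y1 w)" by (simp add: sum.delta)
    finally show "indicator A (Y1 w) = (\<Sum>y\<in>UNIV. indicator A y * indicator (Y1 -` {y} \<inter> space SM) w :: ennreal)" ..
  qed
  also have "\<dots> = (\<Sum>y\<in>UNIV. \<integral>\<^sup>+w. indicator A y * indicator (Y1 -` {y} \<inter> space SM) w \<partial>SM)"
    by (rule nn_integral_sum) (use sets_y in measurable)
  also have "\<dots> = (\<Sum>y\<in>UNIV. indicator A y * ennreal (pY y))"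
    using sets_y by (simp add: nn_integral_cmult pY_def emeasure_eq_measure)
  also have "\<dots> = (\<integral>\<^sup>+y. ennreal (pY y) * indicator A y \<partial>count_space UNIV)"
    by (simp add: nn_integral_count_space_finite mult.commute)
  finally show "(\<integral>\<^sup>+y. ennreal (pY y) * indicator A y \<partial>count_space UNIV) = (\<integral>\<^sup>+w. indicator A (Y1 w) \<partial>SM)" ..
qed simp

lemma Ylaw_eq: "Y_law T mu g = density (count_space UNIV) (\<lambda>y. ennreal (pY y))"
  using B6 unfolding Y_law_def distributed_def by simp

lemma HY: "H_Y T mu g = - (\<integral>s. ln (pY (Y1 s)) \<partial>SM)"
proof -
  interpret information_space SM "exp 1"
    using prob_single by (simp add: information_space_def information_space_axioms_def)
  have "H_Y T mu g = - (\<integral>y. pY y * log (exp 1) (pY y) \<partial>count_space UNIV)"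
    unfolding H_Y_def by (rule entropy_distr[OF B6 pY_nn])
  also have "(\<integral>y. pY y * log (exp 1) (pY y) \<partial>count_space UNIV) = (\<integral>s. log (exp 1) (pY (Y1 s)) \<partial>SM)"
    by (rule distributed_integral[OF B6]) (auto simp: pY_nn)
  finally show ?thesis by (simp add: log_ln[symmetric])
qed

lemma HY_sum: "H_Y T mu g = - (\<Sum>y\<in>UNIV. pY y * ln (pY y))"
proof -
  interpret information_space SM "exp 1"
    using prob_single by (simp add: information_space_def information_space_axioms_def)
  have "H_Y T mu g = - (\<integral>y. pY y * log (exp 1) (pY y) \<partial>count_space UNIV)"
    unfolding H_Y_def by (rule entropy_distr[OF B6 pY_nn])
  then show ?thesis by (simp add: lebesgue_integral_count_space_finite log_ln[symmetric])
qed

lemma pY_le1: "pY y \<le> 1"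
proof -
  interpret prob_space SM by (rule prob_single)
  show ?thesis by (simp add: pY_def)
qed

lemma HY_bounds: "0 \<le> H_Y T mu g" "H_Y T mu g \<le> real CARD('y)"
proof -
  have t: "0 \<le> - (pY y * ln (pY y)) \<and> - (pY y * ln (pY y)) \<le> 1" for y
  proof (cases "pY y = 0")
    case False
    then have p: "0 < pY y" using pY_nn[of y] by simp
    have "ln (pY y) \<le> 0" using p pY_le1[of y] by simp
    moreover have "- ln (pY y) \<le> 1 / pY y - 1"
      using ln_le_minus_one[of "1 / pY y"] p by (simp add: ln_div)
    then have "pY y * (- ln (pY y)) \<le> pY y * (1 / pY y - 1)"
      using p by (intro mult_left_mono) auto
    moreover have "pY y * (1 / pY y - 1) = 1 - pY y" using p by (simp add: field_simps)
    ultimately have a: "pY y * ln (pY y) \<le> 0" and b: "- (pY y * ln (pY y)) \<le> 1 - pY y"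
      using p mult_nonneg_nonpos[of "pY y" "ln (pY y)"] by auto
    show ?thesis using a b p by linarith
  qed simp
  have "H_Y T mu g = (\<Sum>y\<in>UNIV. - (pY y * ln (pY y)))" by (simp add: HY_sum sum_negf)
  moreover have "(\<Sum>y\<in>UNIV. - (pY y * ln (pY y))) \<le> (\<Sum>y\<in>(UNIV::'y set). 1)"
    using t by (intro sum_mono) blast
  moreover have "0 \<le> (\<Sum>y\<in>UNIV. - (pY y * ln (pY y)))"
    using t by (intro sum_nonneg) blast
  ultimately show "0 \<le> H_Y T mu g" "H_Y T mu g \<le> real CARD('y)" by auto
qed


lemma Xs_comp:
  assumes i: "i < n" and f: "f \<in> borel_measurable mu"
  shows "(\<integral>\<^sup>+x. f (x i) \<partial>Xs) = (\<integral>\<^sup>+y. f y \<partial>mu)"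
proof -
  interpret product_prob_space "\<lambda>_. mu" "{..<n}"
    using prob_mu by (simp add: product_prob_space_def product_sigma_finite_def
        product_prob_space_axioms_def prob_space_imp_sigma_finite)
  have "distr Xs mu (\<lambda>x. x i) = mu"
    unfolding Xn_space_def using i by (intro PiM_component) simp
  then have "(\<integral>\<^sup>+y. f y \<partial>mu) = (\<integral>\<^sup>+y. f y \<partial>distr Xs mu (\<lambda>x. x i))" by simp
  also have "\<dots> = (\<integral>\<^sup>+x. f (x i) \<partial>Xs)"
    using i f by (intro nn_integral_distr) (auto simp: Xn_space_def)
  finally show ?thesis ..
qed

lemma proj_meas: "i < n \<Longrightarrow> (\<lambda>w. (fst w, snd w i)) \<in> (cT \<Otimes>\<^sub>M Xs) \<rightarrow>\<^sub>M (cT \<Otimes>\<^sub>M mu)"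
  unfolding Xn_space_def by measurable

lemma proj_meas_Om: "i < n \<Longrightarrow> (\<lambda>w. (fst w, snd w i)) \<in> Om \<rightarrow>\<^sub>M SM"
  using proj_meas by (simp add: measurable_cong_sets[OF sets_Om sets_single])

lemma P1:
  assumes i: "i < n"
  shows "distr Om SM (\<lambda>w. (fst w, snd w i)) = SM"
proof (rule measure_eqI)
  fix A assume "A \<in> sets (distr Om SM (\<lambda>w. (fst w, snd w i)))"
  then have A: "A \<in> sets (cT \<Otimes>\<^sub>M mu)" using sets_single by simp
  have A': "A \<in> sets SM" using A sets_single by simp
  have ind: "indicator A \<in> borel_measurable (cT \<Otimes>\<^sub>M mu)" using A by simp
  have "emeasure (distr Om SM (\<lambda>w. (fst w, snd w i))) A = (\<integral>\<^sup>+w. indicator A (fst w, snd w i) \<partial>Om)"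
    by (rule emeasure_distr_nn[OF proj_meas_Om[OF i] A'])
  also have "\<dots> = (\<Sum>t\<in>T. ennreal (1 / m) * \<integral>\<^sup>+x. indicator A (t, x i) \<partial>Xs)"
    using L1[of "\<lambda>w. indicator A (fst w, snd w i)", OF measurable_compose[OF proj_meas[OF i] ind]]
    by simp
  also have "\<dots> = (\<Sum>t\<in>T. ennreal (1 / m) * \<integral>\<^sup>+y. indicator A (t, y) \<partial>mu)"
  proof (intro sum.cong refl arg_cong2[where f="(*)"])
    fix t assume t: "t \<in> T"
    show "(\<integral>\<^sup>+x. indicator A (t, x i) \<partial>Xs) = (\<integral>\<^sup>+y. indicator A (t, y) \<partial>mu)"
      using Xs_comp[OF i, of "\<lambda>y. indicator A (t, y)"] measurable_compose[OF pc[OF t] ind] by blast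
  qed
  also have "\<dots> = (\<integral>\<^sup>+z. indicator A z \<partial>SM)"
    unfolding single_measure_def by (rule nn_integral_unif_pair[OF finT neT sf_mu ind, symmetric])
  also have "\<dots> = emeasure SM A" using A' by simp
  finally show "emeasure (distr Om SM (\<lambda>w. (fst w, snd w i))) A = emeasure SM A" .
qed simp

lemma lnpY_meas: "(\<lambda>s. ln (pY (Y1 s))) \<in> borel_measurable SM"
  using measurable_compose[OF Y1_meas, of "\<lambda>y. ln (pY y)" borel] by simp

lemma P2:
  assumes i: "i < n"
  shows "(\<integral>w. ln (pY (g (snd w i) (fst w))) \<partial>Om) = - H_Y T mu g"
proof -
  have "(\<integral>w. ln (pY (g (snd w i) (fst w))) \<partial>Om) = (\<integral>s. ln (pY (Y1 s)) \<partial>distr Om SM (\<lambda>w. (fst w, snd w i)))"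
    by (subst integral_distr[OF proj_meas_Om[OF i] lnpY_meas]) simp
  also have "\<dots> = (\<integral>s. ln (pY (Y1 s)) \<partial>SM)" by (simp add: P1[OF i])
  finally show ?thesis by (simp add: HY)
qed

lemma P3: "AE w in Om. \<forall>i\<in>{..<n}. 0 < pY (g (snd w i) (fst w))"
proof -
  have key: "AE w in Om. 0 < pY (g (snd w i) (fst w))" if i: "i < n" for i
  proof -
  have setm: "{s \<in> space SM. 0 < pY (Y1 s)} \<in> sets SM"
  proof -
    have "{s \<in> space SM. 0 < pY (Y1 s)} = Y1 -` {y. 0 < pY y} \<inter> space SM" by auto
    then show ?thesis using measurable_sets[OF Y1_meas, of "{y. 0 < pY y}"] by simp
  qed
  have "AE y in density (count_space UNIV) (\<lambda>y. ennreal (pY y)). 0 < pY y"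
    by (subst AE_density) auto
  then have "AE y in distr SM (count_space UNIV) Y1. 0 < pY y"
    unfolding distributed_distr_eq_density[OF B6] .
  then have "AE s in SM. 0 < pY (Y1 s)"
    by (subst (asm) AE_distr_iff[OF Y1_meas]) auto
  then have "AE s in distr Om SM (\<lambda>w. (fst w, snd w i)). 0 < pY (Y1 s)"
    unfolding P1[OF i] .
  moreover have "(AE s in distr Om SM (\<lambda>w. (fst w, snd w i)). 0 < pY (Y1 s))
      = (AE w in Om. 0 < pY (Y1 (fst w, snd w i)))"
    by (rule AE_distr_iff[OF proj_meas_Om[OF i] setm])
  ultimately have "AE w in Om. 0 < pY (Y1 (fst w, snd w i))" by blast
  then show "AE w in Om. 0 < pY (g (snd w i) (fst w))" by simp
  qed
  show ?thesis by (rule AE_finite_allI) (use key in auto)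
qed


definition "qd y = (\<Prod>i<n. pY (y i))"

lemma qd_nn: "0 \<le> qd y" by (simp add: qd_def prod_nonneg pY_nn)

lemma Q1: "PiM {..<n} (\<lambda>_. Y_law T mu g) = density cE (\<lambda>y. ennreal (qd y))"
proof (rule measure_eqI_finite[where A=E])
  have "sets (PiM {..<n} (\<lambda>_. Y_law T mu g)) = sets (Yn_space n :: (nat \<Rightarrow> 'y) measure)"
    unfolding Yn_space_def by (rule sets_PiM_cong) (auto simp: Y_law_def)
  then show "sets (PiM {..<n} (\<lambda>_. Y_law T mu g)) = Pow E" by (simp add: Yn_space_eq)
  show "sets (density cE (\<lambda>y. ennreal (qd y))) = Pow E" by simp
  show "finite E" by (rule fin_E)
  fix a assume a: "a \<in> E"
  have sing: "{a} = PiE {..<n} (\<lambda>i. {a i})"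
    using a by (auto simp: PiE_iff extensional_def fun_eq_iff) (metis lessThan_iff)
  interpret product_sigma_finite "\<lambda>_::nat. Y_law T mu g"
    unfolding product_sigma_finite_def Y_law_def
    using prob_space.prob_space_distr[OF prob_single Y1_meas] prob_space_imp_sigma_finite by blast
  have "emeasure (PiM {..<n} (\<lambda>_. Y_law T mu g)) {a} = (\<Prod>i<n. emeasure (Y_law T mu g) {a i})"
    unfolding sing by (subst emeasure_PiM) (auto simp: Y_law_def)
  also have "\<dots> = (\<Prod>i<n. ennreal (pY (a i)))"
    by (simp add: Ylaw_eq emeasure_density nn_integral_count_space_finite indicator_def)
  also have "\<dots> = ennreal (qd a)" by (simp add: qd_def prod_ennreal pY_nn)
  also have "\<dots> = emeasure (density cE (\<lambda>y. ennreal (qd y))) {a}"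
    using a by (simp add: emeasure_density)
  finally show "emeasure (PiM {..<n} (\<lambda>_. Y_law T mu g)) {a} = emeasure (density cE (\<lambda>y. ennreal (qd y))) {a}" .
qed

lemma Q_eq: "Q_law T mu g n = density (cE \<Otimes>\<^sub>M Xs) (\<lambda>z. ennreal (qd (fst z)))"
proof -
  have "Q_law T mu g n = density cE (\<lambda>y. ennreal (qd y)) \<Otimes>\<^sub>M density Xs (\<lambda>_. 1)"
    by (simp add: Q_law_def Q1 density_1)
  also have "\<dots> = density (cE \<Otimes>\<^sub>M Xs) (\<lambda>(y, x). ennreal (qd y) * 1)"
    by (rule pair_measure_density) (auto simp: density_1 sf_Xs)
  finally show ?thesis by (simp add: split_beta')
qed


lemma P_eq: "P_law T mu g n = density (cE \<Otimes>\<^sub>M Xs) (\<lambda>z. ennreal (pYX z))"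
  unfolding P_law_def Yn_space_eq Xn_space_def[symmetric]
  using distributed_distr_eq_density[OF B4] by (simp add: Yn_rv_def)

lemma qdF: "qd (F w) = (\<Prod>i<n. pY (g (snd w i) (fst w)))"
  by (simp add: qd_def Yn_rv_def)

lemma AE_qd: "AE w in Om. 0 < qd (F w)"
  using P3
proof (rule eventually_mono)
  fix w assume "\<forall>i\<in>{..<n}. 0 < pY (g (snd w i) (fst w))"
  then show "0 < qd (F w)" by (auto simp: qdF intro!: prod_pos)
qed

lemma lnpYi_int: "i < n \<Longrightarrow> integrable Om (\<lambda>w. ln (pY (g (snd w i) (fst w))))"
proof -
  assume i: "i < n"
  interpret prob_space Om by (rule prob_Om)
  show ?thesis
  proof (rule integrable_const_bound[where B="\<Sum>y\<in>UNIV. \<bar>ln (pY y)\<bar>"])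
    show "AE w in Om. norm (ln (pY (g (snd w i) (fst w)))) \<le> (\<Sum>y\<in>UNIV. \<bar>ln (pY y)\<bar>)"
      by (intro AE_I2, simp) (rule member_le_sum[where f="\<lambda>y. \<bar>ln (pY y)\<bar>"], auto)
    show "(\<lambda>w. ln (pY (g (snd w i) (fst w)))) \<in> borel_measurable Om"
      using measurable_compose[OF proj_meas_Om[OF i] lnpY_meas] by simp
  qed
qed

lemma KL: "KL_PQ T mu g n = aa + real n * H_Y T mu g"
proof -
  interpret EX: sigma_finite_measure "cE \<Otimes>\<^sub>M Xs" by (rule sf_EX)
  interpret prob_space Om by (rule prob_Om)
  have qm: "(\<lambda>z. qd (fst z)) \<in> borel_measurable (cE \<Otimes>\<^sub>M Xs)"
  proof -
    have "qd \<in> borel_measurable cE" by simp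
    from measurable_compose[OF measurable_fst this] show ?thesis .
  qed
  have setq: "{z \<in> space (cE \<Otimes>\<^sub>M Xs). qd (fst z) \<noteq> 0} \<in> sets (cE \<Otimes>\<^sub>M Xs)"
    using qm by measurable
  have "AE w in Om. qd (fst (F w, snd w)) \<noteq> 0" using AE_qd by (rule eventually_mono) simp
  then have "AE z in distr Om (cE \<Otimes>\<^sub>M Xs) (\<lambda>w. (F w, snd w)). qd (fst z) \<noteq> 0"
    by (subst AE_distr_iff[OF FX_meas_Om setq])
  then have "AE z in density (cE \<Otimes>\<^sub>M Xs) (\<lambda>z. ennreal (pYX z)). qd (fst z) \<noteq> 0"
    unfolding distributed_distr_eq_density[OF B4] .
  then have "AE z in cE \<Otimes>\<^sub>M Xs. 0 < ennreal (pYX z) \<longrightarrow> qd (fst z) \<noteq> 0"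
    by (subst (asm) AE_density) (use pYX_meas in simp_all)
  then have ac: "AE z in cE \<Otimes>\<^sub>M Xs. qd (fst z) = 0 \<longrightarrow> pYX z = 0"
    by (rule eventually_mono) (use pYX_nn in \<open>auto simp: less_le\<close>)
  have "KL_PQ T mu g n = (\<integral>z. pYX z * log (exp 1) (pYX z / qd (fst z)) \<partial>(cE \<Otimes>\<^sub>M Xs))"
    unfolding KL_PQ_def Q_eq P_eq
    by (rule EX.KL_density_density) (use qm pYX_meas qd_nn pYX_nn ac in auto)
  also have "\<dots> = (\<integral>w. log (exp 1) (pYX (F w, snd w) / qd (fst (F w, snd w))) \<partial>Om)"
    by (rule distributed_integral[OF B4]) (use qm pYX_meas pYX_nn in measurable)
  also have "\<dots> = (\<integral>w. ln (pYX (F w, snd w)) - (\<Sum>i<n. ln (pY (g (snd w i) (fst w)))) \<partial>Om)"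
  proof (rule integral_cong_AE)
    show "(\<lambda>w. log (exp 1) (pYX (F w, snd w) / qd (fst (F w, snd w)))) \<in> borel_measurable Om"
      using measurable_compose[OF FX_meas_Om, of "\<lambda>z. log (exp 1) (pYX z / qd (fst z))" borel]
        qm pYX_meas by measurable
    show "(\<lambda>w. ln (pYX (F w, snd w)) - (\<Sum>i<n. ln (pY (g (snd w i) (fst w))))) \<in> borel_measurable Om"
      using lnp_meas lnpYi_int by (intro borel_measurable_diff borel_measurable_sum) auto
    show "AE w in Om. log (exp 1) (pYX (F w, snd w) / qd (fst (F w, snd w)))
        = ln (pYX (F w, snd w)) - (\<Sum>i<n. ln (pY (g (snd w i) (fst w))))"
      using eventually_conj[OF AE_space P3]
    proof (rule eventually_mono)
      fix w assume "w \<in> space Om \<and> (\<forall>i\<in>{..<n}. 0 < pY (g (snd w i) (fst w)))"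
      then have w: "w \<in> space Om" and pos: "\<forall>i\<in>{..<n}. 0 < pY (g (snd w i) (fst w))" by auto
      have p: "0 < pYX (F w, snd w)" using p_bounds(1)[OF w] m_pos
        by (smt (verit) divide_pos_pos)
      have q: "0 < qd (F w)" using pos by (auto simp: qdF intro!: prod_pos)
      have "ln (qd (F w)) = (\<Sum>i<n. ln (pY (g (snd w i) (fst w))))"
      proof -
        have pos': "pY (g (snd w i) (fst w)) \<noteq> 0" if "i \<in> {..<n}" for i
          using pos that by force
        show ?thesis unfolding qdF by (rule ln_prod) (use pos' in auto)
      qed
      then show "log (exp 1) (pYX (F w, snd w) / qd (fst (F w, snd w)))
        = ln (pYX (F w, snd w)) - (\<Sum>i<n. ln (pY (g (snd w i) (fst w))))"
        using p q by (simp add: log_ln[symmetric] ln_div)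
    qed
  qed
  also have "\<dots> = aa - (\<Sum>i<n. (\<integral>w. ln (pY (g (snd w i) (fst w))) \<partial>Om))"
  proof -
    have i1: "integrable Om (\<lambda>w. \<Sum>i<n. ln (pY (g (snd w i) (fst w))))"
      by (rule Bochner_Integration.integrable_sum) (use lnpYi_int in auto)
    have "(\<integral>w. (\<Sum>i<n. ln (pY (g (snd w i) (fst w)))) \<partial>Om) = (\<Sum>i<n. (\<integral>w. ln (pY (g (snd w i) (fst w))) \<partial>Om))"
      by (rule Bochner_Integration.integral_sum) (use lnpYi_int in auto)
    then show ?thesis
      by (simp add: Bochner_Integration.integral_diff[OF lnp_int i1] aa_def)
  qed
  also have "\<dots> = aa + real n * H_Y T mu g"
    by (simp add: P2)
  finally show ?thesis .
qed


lemma part1: "cond_MI T mu g n = real n * H_Y T mu g - KL_PQ T mu g n"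
proof -
  have "cond_MI T mu g n = prob_space.mutual_information Om (exp 1) cT (cE \<Otimes>\<^sub>M Xs) fst (\<lambda>w. (F w, snd w))
      - prob_space.mutual_information Om (exp 1) cT Xs fst snd"
    unfolding cond_MI_def prob_space.conditional_mutual_information_def[OF prob_Om] Yn_space_eq ..
  then show ?thesis by (simp add: MI0 MI1 KL)
qed

lemma CH': "cond_H T mu g n = ln m + aa"
  unfolding cond_H_def Yn_space_eq by (rule CH)

lemma part2: "ln m \<noteq> 0 \<Longrightarrow>
  (1 - cond_H T mu g n / H_theta T) + KL_PQ T mu g n / H_theta T = real n * H_Y T mu g / H_theta T"
  unfolding CH' KL HT by (simp add: field_simps)

end

lemma chanI: "finite T \<Longrightarrow> T \<noteq> {} \<Longrightarrow> prob_space mu \<Longrightarrow>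
  (\<And>t. t \<in> T \<Longrightarrow> (\<lambda>x. g x t) \<in> mu \<rightarrow>\<^sub>M count_space UNIV) \<Longrightarrow> chan T mu g"
  by (simp add: chan_def)


theorem proposition3:
  fixes Th :: "nat \<Rightarrow> (nat \<Rightarrow> real) set"
    and M L n :: "nat \<Rightarrow> nat"
    and D :: "nat \<Rightarrow> (nat \<Rightarrow> real) measure"
    and g :: "nat \<Rightarrow> (nat \<Rightarrow> real) \<Rightarrow> (nat \<Rightarrow> real) \<Rightarrow> 'y::finite"
  assumes Th_sphere: "\<And>N. Th N \<subseteq> sphere_vecs N"
    and Th_finite: "\<And>N. finite (Th N)"
    and Th_ne: "\<And>N. Th N \<noteq> {}"
    and M_card: "\<And>N. card (Th N) = M N"
    and M_inf: "filterlim M at_top sequentially"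
    and Th_inner: "\<And>N t t'. t \<in> Th N \<Longrightarrow> t' \<in> Th N \<Longrightarrow> inner_vec N t t' \<ge> 0"
    and D_prob: "\<And>N. prob_space (D N)"
    and D_sets: "\<And>N. sets (D N) = sets (euclid_space (L N))"
    and g_meas: "\<And>N t. t \<in> Th N \<Longrightarrow> (\<lambda>x. g N x t) \<in> D N \<rightarrow>\<^sub>M count_space UNIV"
  shows "(\<forall>N. cond_MI (Th N) (D N) (g N) (n N)
              = real (n N) * H_Y (Th N) (D N) (g N) - KL_PQ (Th N) (D N) (g N) (n N))
       \<and> (\<exists>\<epsilon> :: nat \<Rightarrow> real. \<epsilon> \<longlonglongrightarrow> 0 \<and>
           (\<forall>\<^sub>F N in sequentially.
              (1 - cond_H (Th N) (D N) (g N) (n N) / H_theta (Th N))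
                + KL_PQ (Th N) (D N) (g N) (n N) / H_theta (Th N)
              = (1 + \<epsilon> N) * (real (n N) / real (n_star (Th N) (D N) (g N)))))"
proof -
  have C: "chan (Th N) (D N) (g N)" for N
    by (rule chanI[OF Th_finite Th_ne D_prob g_meas])
  define K where "K = real CARD('y)"
  define H where "H N = H_theta (Th N)" for N
  define hY where "hY N = H_Y (Th N) (D N) (g N)" for N
  define ns where "ns N = n_star (Th N) (D N) (g N)" for N
  have H_eq: "H N = ln (real (M N))" for N
    using chan.HT[OF C] M_card by (simp add: H_def)
  have hY0: "0 \<le> hY N" and hYK: "hY N \<le> K" for N
    using chan.HY_bounds[OF C] by (auto simp: hY_def K_def)
  have ns_eq: "ns N = nat \<lfloor>H N / hY N\<rfloor>" for N
    by (simp add: ns_def n_star_def H_def hY_def)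
  have lnM: "filterlim (\<lambda>N. ln (real (M N))) at_top sequentially"
    by (rule filterlim_compose[OF ln_at_top filterlim_compose[OF filterlim_real_sequentially M_inf]])
  then have Hinf: "filterlim H at_top sequentially" by (simp add: H_eq[abs_def])
  have evH: "eventually (\<lambda>N. H N > max K 0) sequentially"
  proof -
    have "\<forall>Z. eventually (\<lambda>x. Z < H x) sequentially" using Hinf filterlim_at_top_dense by blast
    then show ?thesis by (rule spec)
  qed
  define eps where "eps N = (if 0 < hY N \<and> 0 < ns N then hY N * real (ns N) / H N - 1 else 0)" for N
  have bound: "\<bar>eps N\<bar> \<le> K / H N" if HN: "H N > max K 0" for N
  proof (cases "0 < hY N \<and> 0 < ns N")
    case True
    then have hp: "0 < hY N" by simp
    have Hp: "0 < H N" using HN by simp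
    have nn: "0 \<le> H N / hY N" using hp Hp by simp
    have r: "real (ns N) = of_int \<lfloor>H N / hY N\<rfloor>" using nn by (simp add: ns_eq)
    have lo: "H N / hY N - 1 < real (ns N)" and hi: "real (ns N) \<le> H N / hY N"
      unfolding r by linarith+
    have "hY N * real (ns N) \<le> H N" using hi hp by (simp add: field_simps)
    moreover have "H N - hY N < hY N * real (ns N)" using lo hp by (simp add: field_simps)
    ultimately have d: "\<bar>hY N * real (ns N) - H N\<bar> \<le> hY N" by linarith
    have e: "hY N * real (ns N) / H N - 1 = (hY N * real (ns N) - H N) / H N"
      using Hp by (simp add: field_simps)
    have "\<bar>hY N * real (ns N) / H N - 1\<bar> = \<bar>hY N * real (ns N) - H N\<bar> / H N"
      using Hp by (simp add: e abs_divide)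
    also have "\<dots> \<le> hY N / H N" using d Hp by (simp add: divide_right_mono)
    finally have "\<bar>hY N * real (ns N) / H N - 1\<bar> \<le> hY N / H N" .
    also have "\<dots> \<le> K / H N" using hYK Hp by (simp add: divide_right_mono)
    finally show ?thesis using True by (simp add: eps_def)
  next
    case False
    have K0: "0 \<le> K" by (simp add: K_def)
    have "eps N = 0" using False by (simp add: eps_def)
    then show ?thesis using HN K0 by simp
  qed
  have KH: "(\<lambda>N. K / H N) \<longlonglongrightarrow> 0"
    by (rule tendsto_divide_0[OF tendsto_const filterlim_at_top_imp_at_infinity[OF Hinf]])
  have eps0: "eps \<longlonglongrightarrow> 0"
    by (rule Lim_null_comparison[OF eventually_mono[OF evH] KH]) (use bound in simp)
  have ev: "eventually (\<lambda>N. (1 - cond_H (Th N) (D N) (g N) (n N) / H_theta (Th N))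
                + KL_PQ (Th N) (D N) (g N) (n N) / H_theta (Th N)
              = (1 + eps N) * (real (n N) / real (n_star (Th N) (D N) (g N)))) sequentially"
    using evH
  proof (rule eventually_mono)
    fix N assume HN: "H N > max K 0"
    have Hp: "0 < H N" using HN by simp
    have "ln (real (card (Th N))) \<noteq> 0" using Hp by (simp add: H_eq M_card)
    then have lhs: "(1 - cond_H (Th N) (D N) (g N) (n N) / H_theta (Th N))
                + KL_PQ (Th N) (D N) (g N) (n N) / H_theta (Th N) = real (n N) * hY N / H N"
      by (simp add: chan.part2[OF C] hY_def H_def)
    show "(1 - cond_H (Th N) (D N) (g N) (n N) / H_theta (Th N))
                + KL_PQ (Th N) (D N) (g N) (n N) / H_theta (Th N)
              = (1 + eps N) * (real (n N) / real (n_star (Th N) (D N) (g N)))"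
    proof (cases "hY N = 0")
      case True
      then show ?thesis using lhs by (simp add: n_star_def eps_def hY_def[symmetric])
    next
      case False
      then have hp: "0 < hY N" using hY0[of N] by simp
      have "1 \<le> H N / hY N" using HN hYK[of N] hp by (simp add: field_simps)
      then have nsp: "0 < ns N" by (simp add: ns_eq)
      have "(1 + eps N) * (real (n N) / real (ns N)) = real (n N) * hY N / H N"
        using hp nsp Hp by (simp add: eps_def field_simps)
      then show ?thesis using lhs by (simp add: ns_def)
    qed
  qed
  show ?thesis
    using chan.part1[OF C] eps0 ev by blast
qed


end
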